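(* Assume $(\phi1)$, $(\phi3)$ and $(\phi4)$. Then: (i) $J_1(s,b):=\phi(\frac{s^2+b^2}{2})b^2$ is increasing and convex in $b$ on $[0,\infty)$ for every fixed $s\in\mathbb{R}$; (ii) $J_2(s,b):=\Phi(\frac{s^2+b^2}{2})-\frac1N\phi(\frac{s^2+b^2}{2})b^2$ is increasing and convex in $b$ on $[0,\infty)$ for every fixed $s\in\mathbb{R}$.
   Context: $N\ge3$. $\phi:[0,\infty)\to\mathbb{R}$, $\Phi(s)=\int_0^s\phi$. $(\phi1)$: $\phi$ continuous, $0<\phi_0\le\phi\le\phi_1$ for constants $\phi_0<\phi_1$. $(\phi3)$: $\phi\in C^1([0,\infty))$, $s|\phi'(s)|\le C$ and $\phi_0\le\phi(s)+2s\phi'(s)$ for all $s\ge0$. $(\phi4)$: $\phi\in C^2([0,\infty))$, $s^2|\phi''(s)|\le C$, and for all $s\ge0$: $3\phi'(s)+2s|\phi''(s)|\le0$ and $0\le\phi(s)+5s\phi'(s)-2s^2|\phi''(s)|$. *)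

theory Defs
  imports "HOL-Analysis.Analysis"
begin

definition Phi :: "(real \<Rightarrow> real) \<Rightarrow> real \<Rightarrow> real" where
  "Phi phi s = integral {0..s} phi"

definition cond_phi1 :: "(real \<Rightarrow> real) \<Rightarrow> real \<Rightarrow> real \<Rightarrow> bool" where
  "cond_phi1 phi p0 p1 \<longleftrightarrow> continuous_on {0..} phi \<and> 0 < p0 \<and> p0 < p1 \<and>
     (\<forall>s\<ge>0. p0 \<le> phi s \<and> phi s \<le> p1)"

definition cond_phi3 :: "(real \<Rightarrow> real) \<Rightarrow> (real \<Rightarrow> real) \<Rightarrow> real \<Rightarrow> bool" where
  "cond_phi3 phi dphi p0 \<longleftrightarrow>
     (\<forall>s\<ge>0. (phi has_real_derivative dphi s) (at s within {0..})) \<and>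
     continuous_on {0..} dphi \<and>
     (\<exists>C. \<forall>s\<ge>0. s * \<bar>dphi s\<bar> \<le> C) \<and>
     (\<forall>s\<ge>0. p0 \<le> phi s + 2 * s * dphi s)"

definition cond_phi4 :: "(real \<Rightarrow> real) \<Rightarrow> (real \<Rightarrow> real) \<Rightarrow> (real \<Rightarrow> real) \<Rightarrow> bool" where
  "cond_phi4 phi dphi ddphi \<longleftrightarrow>
     (\<forall>s\<ge>0. (dphi has_real_derivative ddphi s) (at s within {0..})) \<and>
     continuous_on {0..} ddphi \<and>
     (\<exists>C. \<forall>s\<ge>0. s^2 * \<bar>ddphi s\<bar> \<le> C) \<and>
     (\<forall>s\<ge>0. 3 * dphi s + 2 * s * \<bar>ddphi s\<bar> \<le> 0) \<and>
     (\<forall>s\<ge>0. 0 \<le> phi s + 5 * s * dphi s - 2 * s^2 * \<bar>ddphi s\<bar>)"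

definition J1 :: "(real \<Rightarrow> real) \<Rightarrow> real \<Rightarrow> real \<Rightarrow> real" where
  "J1 phi s b = phi ((s^2 + b^2) / 2) * b^2"

definition J2 :: "nat \<Rightarrow> (real \<Rightarrow> real) \<Rightarrow> real \<Rightarrow> real \<Rightarrow> real" where
  "J2 N phi s b = Phi phi ((s^2 + b^2) / 2) - (1 / real N) * phi ((s^2 + b^2) / 2) * b^2"

end

theory Submission
  imports Defs
begin

lemma mono_convex_from_derivs:
  fixes f f1 f2 :: "real \<Rightarrow> real"
  assumes d1: "\<And>x. 0 \<le> x \<Longrightarrow> (f has_real_derivative f1 x) (at x)"
    and d2: "\<And>x. 0 \<le> x \<Longrightarrow> (f1 has_real_derivative f2 x) (at x)"
    and p1: "\<And>x. 0 \<le> x \<Longrightarrow> 0 \<le> f1 x"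
    and p2: "\<And>x. 0 \<le> x \<Longrightarrow> 0 \<le> f2 x"
  shows "mono_on {0..} f \<and> convex_on {0..} f"
proof
  show "mono_on {0..} f"
  proof (rule mono_onI)
    fix r s :: real assume "r \<in> {0..}" "s \<in> {0..}" "r \<le> s"
    show "f r \<le> f s"
    proof (rule DERIV_nonneg_imp_nondecreasing[of r s f])
      fix x assume "r \<le> x" "x \<le> s"
      then have "0 \<le> x" using \<open>r \<in> {0..}\<close> by simp
      then show "\<exists>y. (f has_real_derivative y) (at x) \<and> 0 \<le> y" using d1 p1 by blast
    qed (use \<open>r \<le> s\<close> in auto)
  qed
  show "convex_on {0..} f"
  proof (rule convex_on_realI[where f'=f1])
    show "connected {0::real..}" by simp
    show "\<And>x. x \<in> {0..} \<Longrightarrow> (f has_real_derivative f1 x) (at x)" using d1 by auto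
    fix x y :: real assume "x \<in> {0..}" "y \<in> {0..}" "x \<le> y"
    show "f1 x \<le> f1 y"
    proof (rule DERIV_nonneg_imp_nondecreasing[of x y f1])
      fix z assume "x \<le> z" "z \<le> y"
      then have "0 \<le> z" using \<open>x \<in> {0..}\<close> by simp
      then show "\<exists>w. (f1 has_real_derivative w) (at z) \<and> 0 \<le> w" using d2 p2 by blast
    qed (use \<open>x \<le> y\<close> in auto)
  qed
qed

lemma comp_deriv:
  fixes h h' :: "real \<Rightarrow> real"
  assumes "\<And>t. 0 \<le> t \<Longrightarrow> (h has_real_derivative h' t) (at t within {0..})"
  shows "((\<lambda>b. h ((s^2 + b^2) / 2)) has_real_derivative h' ((s^2 + b^2) / 2) * b) (at b)"
proof -
  let ?g = "\<lambda>b::real. (s^2 + b^2) / 2"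
  have g: "(?g has_real_derivative b) (at b)"
    by (auto intro!: derivative_eq_intros)
  have "0 \<le> ?g b" by simp
  then have "(h has_real_derivative h' (?g b)) (at (?g b) within {0..})" using assms by blast
  then have "(h has_real_derivative h' (?g b)) (at (?g b) within (?g ` UNIV))"
    by (rule has_field_derivative_subset) auto
  from DERIV_image_chain[OF this g] show ?thesis by (simp add: o_def)
qed

lemma Phi_deriv:
  assumes "continuous_on {0..} phi" "0 \<le> t"
  shows "(Phi phi has_real_derivative phi t) (at t within {0..})"
proof -
  have "continuous_on {0..t+1} phi" using assms(1) by (rule continuous_on_subset) auto
  from integral_has_real_derivative[OF this, of t] assms(2)
  have "((\<lambda>x. integral {0..x} phi) has_real_derivative phi t) (at t within {0..t+1})" by simp
  moreover have "at t within {0..t+1} = at t within {0..}"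
    by (rule at_within_nhd[where S="{..<t+1}"]) auto
  ultimately show ?thesis unfolding Phi_def[abs_def] by simp
qed

theorem lemma6p1:
  fixes N :: nat and phi dphi ddphi :: "real \<Rightarrow> real" and p0 p1 :: real
  assumes "N \<ge> 3"
    and "cond_phi1 phi p0 p1"
    and "cond_phi3 phi dphi p0"
    and "cond_phi4 phi dphi ddphi"
  shows "(\<forall>s::real. mono_on {0..} (J1 phi s) \<and> convex_on {0..} (J1 phi s)) \<and>
         (\<forall>s::real. mono_on {0..} (J2 N phi s) \<and> convex_on {0..} (J2 N phi s))"
proof -
  from assms(2) have cont: "continuous_on {0..} phi" and p0: "0 < p0"
    and pb: "\<And>t. 0 \<le> t \<Longrightarrow> p0 \<le> phi t" unfolding cond_phi1_def by auto
  from assms(3) have dp: "\<And>t. 0 \<le> t \<Longrightarrow> (phi has_real_derivative dphi t) (at t within {0..})"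
    unfolding cond_phi3_def by auto
  from assms(4) have ddp: "\<And>t. 0 \<le> t \<Longrightarrow> (dphi has_real_derivative ddphi t) (at t within {0..})"
    and c1: "\<And>t. 0 \<le> t \<Longrightarrow> 3 * dphi t + 2 * t * \<bar>ddphi t\<bar> \<le> 0"
    and c2: "\<And>t. 0 \<le> t \<Longrightarrow> 0 \<le> phi t + 5 * t * dphi t - 2 * t^2 * \<bar>ddphi t\<bar>"
    unfolding cond_phi4_def by auto
  have Pd: "\<And>t. 0 \<le> t \<Longrightarrow> (Phi phi has_real_derivative phi t) (at t within {0..})"
    using Phi_deriv[OF cont] by blast
  have n: "real N \<ge> 3" using assms(1) by simp
  have key: "0 \<le> phi t \<and> dphi t \<le> 0 \<and> 0 \<le> 2 * phi t + u * dphi t \<and>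
      0 \<le> 2 * phi t + 5 * u * dphi t + u^2 * ddphi t \<and>
      0 \<le> (1 - 2 / real N) * phi t - (1 / real N) * u * dphi t \<and>
      0 \<le> phi t + u * dphi t - (1 / real N) * (2 * phi t + 5 * u * dphi t + u^2 * ddphi t)"
    if "0 \<le> u" "u \<le> 2 * t" for u t
  proof -
    have t: "0 \<le> t" using that by simp
    define a where "a = phi t"
    define d where "d = dphi t"
    define e where "e = ddphi t"
    have a: "0 < a" using pb[OF t] p0 unfolding a_def by simp
    define P where "P = t * d"
    define Q where "Q = t^2 * \<bar>e\<bar>"
    define R where "R = u * d"
    define S where "S = u^2 * e"
    define W where "W = t * \<bar>e\<bar>"
    define V where "V = u^2 * \<bar>e\<bar>"
    have h1: "3 * d + 2 * W \<le> 0" using c1[OF t] unfolding d_def e_def W_def by (simp add: mult.assoc)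
    have h2: "0 \<le> a + 5 * P - 2 * Q" using c2[OF t] unfolding a_def d_def e_def P_def Q_def
      by (simp add: mult.assoc)
    have W0: "0 \<le> W" using t unfolding W_def by simp
    have Q0: "0 \<le> Q" unfolding Q_def by simp
    have d: "d \<le> 0" using h1 W0 by linarith
    have P0: "P \<le> 0" unfolding P_def using t d by (simp add: mult_nonneg_nonpos)
    have R0: "R \<le> 0" unfolding R_def using that d by (simp add: mult_nonneg_nonpos)
    have "(2 * t - u) * d \<le> 0" using that d by (intro mult_nonneg_nonpos) auto
    then have ud: "2 * P \<le> R" unfolding P_def R_def by (simp add: algebra_simps)
    have "\<bar>S\<bar> = V" unfolding S_def V_def by (simp add: abs_mult)
    then have S1: "S \<le> V" and S2: "- V \<le> S" by linarith+
    have "u * (u * \<bar>e\<bar>) \<le> u * (2 * t * \<bar>e\<bar>)"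
      using that by (intro mult_left_mono mult_right_mono) auto
    then have V1: "V \<le> 2 * (u * W)" unfolding V_def W_def by (simp add: power2_eq_square algebra_simps)
    have "u * W \<le> (2 * t) * W" using that W0 by (intro mult_right_mono) auto
    then have V2: "u * W \<le> 2 * Q" unfolding W_def Q_def by (simp add: power2_eq_square algebra_simps)
    have "u * (2 * W) \<le> u * (- 3 * d)" using h1 \<open>0 \<le> u\<close> by (intro mult_left_mono) auto
    then have V3: "2 * (u * W) \<le> -3 * R" unfolding R_def by (simp add: algebra_simps)
    have A: "0 \<le> 2 * a + R" using ud h2 Q0 P0 by linarith
    have B: "0 \<le> 2 * a + 5 * R + S" using ud h2 S2 V1 V2 by linarith
    have C: "0 \<le> (1 - 2 / real N) * a - (1 / real N) * R"
    proof -
      have "0 \<le> (1 - 2 / real N) * a" using n a by (simp add: field_simps)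
      moreover have "(1 / real N) * R \<le> 0" using n R0 by (simp add: divide_nonpos_nonneg)
      ultimately show ?thesis by linarith
    qed
    have D: "0 \<le> a + R - (1 / real N) * (2 * a + 5 * R + S)"
    proof -
      have E: "0 \<le> - 3 * R - S" using S1 V1 V3 by linarith
      have F: "0 \<le> a + R" using ud h2 Q0 P0 by linarith
      have "a + R - (1 / real N) * (2 * a + 5 * R + S)
           = (1 - 2 / real N) * (a + R) + (1 / real N) * (- 3 * R - S)"
        using n by (simp add: field_simps)
      moreover have "0 \<le> (1 - 2 / real N) * (a + R)" using n F by (intro mult_nonneg_nonneg) (simp_all add: field_simps)
      moreover have "0 \<le> (1 / real N) * (- 3 * R - S)" using n E by simp
      ultimately show ?thesis by linarith
    qed
    have a0: "0 \<le> a" using a by simp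
    note defs = a_def d_def e_def R_def S_def
    show ?thesis using A B C D a0 d unfolding defs by (simp add: mult.assoc)
  qed
  have part1: "mono_on {0..} (J1 phi s) \<and> convex_on {0..} (J1 phi s)"
    and part2: "mono_on {0..} (J2 N phi s) \<and> convex_on {0..} (J2 N phi s)" for s
  proof -
    define g where "g = (\<lambda>b::real. (s^2 + b^2) / 2)"
    have F1: "((\<lambda>b. phi (g b)) has_real_derivative dphi (g b) * b) (at b)" for b
      unfolding g_def by (rule comp_deriv[OF dp])
    have F2: "((\<lambda>b. dphi (g b)) has_real_derivative ddphi (g b) * b) (at b)" for b
      unfolding g_def by (rule comp_deriv[OF ddp])
    have F3: "((\<lambda>b. Phi phi (g b)) has_real_derivative phi (g b) * b) (at b)" for b
      unfolding g_def by (rule comp_deriv[OF Pd])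
    define D1 where "D1 = (\<lambda>b. 2 * b * phi (g b) + b^3 * dphi (g b))"
    define E1 where "E1 = (\<lambda>b. 2 * phi (g b) + 5 * b^2 * dphi (g b) + b^2 * b^2 * ddphi (g b))"
    have J1e: "J1 phi s = (\<lambda>b. phi (g b) * b^2)" by (rule ext) (simp add: J1_def g_def)
    have J2e: "J2 N phi s = (\<lambda>b. Phi phi (g b) - (1 / real N) * (phi (g b) * b^2))"
      by (rule ext) (simp add: J2_def g_def)
    have dJ1: "((\<lambda>b. phi (g b) * b^2) has_real_derivative D1 b) (at b)" for b
      by (rule DERIV_cong[OF DERIV_mult[OF F1 DERIV_pow[of 2 b]]])
         (simp add: D1_def algebra_simps power2_eq_square power3_eq_cube)
    have dD1: "(D1 has_real_derivative E1 b) (at b)" for b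
    proof -
      have "((\<lambda>b. 2 * b * phi (g b) + b^3 * dphi (g b)) has_real_derivative
          (2 * b * (dphi (g b) * b) + 2 * 1 * phi (g b)) + (b^3 * (ddphi (g b) * b) + (3 * b^2) * dphi (g b))) (at b)"
      proof -
        have P3: "((\<lambda>x. x^3) has_real_derivative 3 * b^2) (at b)"
          by (rule DERIV_cong[OF DERIV_pow[of 3 b]]) simp
        have P1: "((\<lambda>x. 2 * x) has_real_derivative 2 * 1) (at b)"
          by (intro DERIV_cmult DERIV_ident)
        show ?thesis
          by (intro DERIV_add DERIV_mult' P1 P3 F1 F2)
      qed
      then show ?thesis unfolding D1_def
        by (rule DERIV_cong) (simp add: E1_def algebra_simps power2_eq_square power3_eq_cube)
    qed
    have kb: "0 \<le> phi (g b) \<and> dphi (g b) \<le> 0 \<and> 0 \<le> 2 * phi (g b) + b^2 * dphi (g b) \<and>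
      0 \<le> 2 * phi (g b) + 5 * b^2 * dphi (g b) + (b^2)^2 * ddphi (g b) \<and>
      0 \<le> (1 - 2 / real N) * phi (g b) - (1 / real N) * b^2 * dphi (g b) \<and>
      0 \<le> phi (g b) + b^2 * dphi (g b) - (1 / real N) * (2 * phi (g b) + 5 * b^2 * dphi (g b) + (b^2)^2 * ddphi (g b))" for b
      by (rule key) (auto simp: g_def)
    have pD1: "0 \<le> D1 b" if "0 \<le> b" for b
    proof -
      have "D1 b = b * (2 * phi (g b) + b^2 * dphi (g b))" unfolding D1_def
        by (simp add: algebra_simps power2_eq_square power3_eq_cube)
      then show ?thesis using kb[of b] that by simp
    qed
    have pE1: "0 \<le> E1 b" for b
      using kb[of b] unfolding E1_def by (simp add: power2_eq_square)
    show "mono_on {0..} (J1 phi s) \<and> convex_on {0..} (J1 phi s)"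
      unfolding J1e by (rule mono_convex_from_derivs[OF dJ1 dD1 pD1 pE1])
    define D2 where "D2 = (\<lambda>b. phi (g b) * b - (1 / real N) * D1 b)"
    define E2 where "E2 = (\<lambda>b. phi (g b) + b^2 * dphi (g b) - (1 / real N) * E1 b)"
    have dJ2: "((\<lambda>b. Phi phi (g b) - (1 / real N) * (phi (g b) * b^2)) has_real_derivative D2 b) (at b)" for b
      unfolding D2_def by (intro DERIV_diff F3 DERIV_cmult dJ1)
    have dD2: "(D2 has_real_derivative E2 b) (at b)" for b
    proof -
      have "((\<lambda>b. phi (g b) * b - (1 / real N) * D1 b) has_real_derivative
          (phi (g b) * 1 + dphi (g b) * b * b) - (1 / real N) * E1 b) (at b)"
        by (intro DERIV_diff DERIV_mult' DERIV_cmult F1 dD1 DERIV_ident)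
      then show ?thesis unfolding D2_def
        by (rule DERIV_cong) (simp add: E2_def algebra_simps power2_eq_square)
    qed
    have pD2: "0 \<le> D2 b" if "0 \<le> b" for b
    proof -
      have "D2 b = b * ((1 - 2 / real N) * phi (g b) - (1 / real N) * b^2 * dphi (g b))"
        unfolding D2_def D1_def by (simp add: algebra_simps power2_eq_square power3_eq_cube)
      then show ?thesis using kb[of b] that by simp
    qed
    have pE2: "0 \<le> E2 b" for b
      using kb[of b] unfolding E2_def E1_def by (simp add: power2_eq_square)
    show "mono_on {0..} (J2 N phi s) \<and> convex_on {0..} (J2 N phi s)"
      unfolding J2e by (rule mono_convex_from_derivs[OF dJ2 dD2 pD2 pE2])
  qed
  show ?thesis using part1 part2 by blast
qed

end
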